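(* Suppose there exist a measurable set $\widetilde X\subset X$ with $\mu(\widetilde X)>0$ and a measurable function $A:\widetilde X\to(0,+\infty)$ such that for every $\tau\in\widetilde X$: (i) $g(u,\tau)=0$ if and only if $u=0$; (ii) $K(s,\tau)>0$ for all $s\in(-A(\tau),A(\tau))$. If $\phi$ is a solution of (E) with $\phi(0)=0$, then $\phi(t)=0$ for all $t\in\mathbb{R}$.
   Context: Let $(X,\mu)$ be a finite measure space. Let $K:\mathbb{R}\times X\to[0,\infty)$ be measurable and integrable on $\mathbb{R}\times X$, with $\int_{\mathbb{R}}K(s,\tau)\,ds>0$ for every $\tau$. Let $g:[0,\infty)\times X\to[0,\infty)$ be measurable, with $g(0,\tau)=0$, $g(\cdot,\tau)$ continuous for each $\tau$, and the derivative $g'(0,\tau)$ at $0$ existing and positive. Equation (E): $\phi(t)=\int_X d\mu(\tau)\int_{\mathbb{R}}K(s,\tau)\,g(\phi(t-s),\tau)\,ds$, $t\in\mathbb{R}$; a solution is a continuous function $\phi:\mathbb{R}\to[0,\infty)$ satisfying (E) for all $t$. *)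

theory Defs
  imports "HOL-Analysis.Analysis"
begin

end

theory Submission
  imports Defs
begin

theorem lemma1p2:
  fixes M :: "'x measure"
    and K :: "real \<Rightarrow> 'x \<Rightarrow> real"
    and g :: "real \<Rightarrow> 'x \<Rightarrow> real"
    and Xt :: "'x set"
    and A :: "'x \<Rightarrow> real"
    and \<phi> :: "real \<Rightarrow> real"
  assumes fin: "finite_measure M"
    and K_nonneg: "\<And>s \<tau>. \<tau> \<in> space M \<Longrightarrow> K s \<tau> \<ge> 0"
    and K_int: "integrable (lborel \<Otimes>\<^sub>M M) (\<lambda>(s, \<tau>). K s \<tau>)"
    and K_pos: "\<And>\<tau>. \<tau> \<in> space M \<Longrightarrow> (\<integral>\<^sup>+ s. ennreal (K s \<tau>) \<partial>lborel) > 0"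
    and g_meas: "(\<lambda>(u, \<tau>). g u \<tau>) \<in> borel_measurable (restrict_space (lborel \<Otimes>\<^sub>M M) ({0..} \<times> space M))"
    and g_nonneg: "\<And>u \<tau>. u \<ge> 0 \<Longrightarrow> \<tau> \<in> space M \<Longrightarrow> g u \<tau> \<ge> 0"
    and g_zero: "\<And>\<tau>. \<tau> \<in> space M \<Longrightarrow> g 0 \<tau> = 0"
    and g_cont: "\<And>\<tau>. \<tau> \<in> space M \<Longrightarrow> continuous_on {0..} (\<lambda>u. g u \<tau>)"
    and g_deriv: "\<And>\<tau>. \<tau> \<in> space M \<Longrightarrow>
        \<exists>d > 0. ((\<lambda>u. g u \<tau>) has_real_derivative d) (at 0 within {0..})"
    and Xt_sets: "Xt \<in> sets M"
    and Xt_pos: "measure M Xt > 0"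
    and A_meas: "A \<in> borel_measurable (restrict_space M Xt)"
    and A_pos: "\<And>\<tau>. \<tau> \<in> Xt \<Longrightarrow> A \<tau> > 0"
    and hyp_i: "\<And>\<tau> u. \<tau> \<in> Xt \<Longrightarrow> u \<ge> 0 \<Longrightarrow> (g u \<tau> = 0 \<longleftrightarrow> u = 0)"
    and hyp_ii: "\<And>\<tau> s. \<tau> \<in> Xt \<Longrightarrow> - A \<tau> < s \<Longrightarrow> s < A \<tau> \<Longrightarrow> K s \<tau> > 0"
    and phi_cont: "continuous_on UNIV \<phi>"
    and phi_nonneg: "\<And>t. \<phi> t \<ge> 0"
    and phi_sol: "\<And>t. ennreal (\<phi> t) =
        (\<integral>\<^sup>+ \<tau>. (\<integral>\<^sup>+ s. ennreal (K s \<tau> * g (\<phi> (t - s)) \<tau>) \<partial>lborel) \<partial>M)"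
    and phi0: "\<phi> 0 = 0"
  shows "\<forall>t. \<phi> t = 0"
proof -
  have phi_meas: "\<phi> \<in> borel_measurable borel"
    using phi_cont by (rule borel_measurable_continuous_onI)
  have Kmeas: "(\<lambda>(s, \<tau>). K s \<tau>) \<in> borel_measurable (lborel \<Otimes>\<^sub>M M)"
    using K_int by (rule borel_measurable_integrable)
  have loc: "\<exists>e>0. \<forall>y. \<bar>y - t\<bar> < e \<longrightarrow> \<phi> y = 0" if t0: "\<phi> t = 0" for t
  proof -
    define F where "F = (\<lambda>(s::real, \<tau>::'x). ennreal (K s \<tau> * g (\<phi> (t - s)) \<tau>))"
    have h: "(\<lambda>(s, \<tau>). (\<phi> (t - s), \<tau>)) \<in> measurable (lborel \<Otimes>\<^sub>M M) (restrict_space (lborel \<Otimes>\<^sub>M M) ({0..} \<times> space M))"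
    proof (rule measurable_restrict_space2)
      show "(\<lambda>(s, \<tau>). (\<phi> (t - s), \<tau>)) \<in> space (lborel \<Otimes>\<^sub>M M) \<rightarrow> {0..} \<times> space M"
        using phi_nonneg by (auto simp: space_pair_measure)
      have "(\<lambda>s. \<phi> (t - s)) \<in> borel_measurable lborel"
        using phi_meas by measurable
      then show "(\<lambda>(s, \<tau>). (\<phi> (t - s), \<tau>)) \<in> measurable (lborel \<Otimes>\<^sub>M M) (lborel \<Otimes>\<^sub>M M)"
        by (auto intro!: measurable_Pair simp: split_beta' measurable_lborel2)
    qed
    have Gm: "(\<lambda>(s, \<tau>). g (\<phi> (t - s)) \<tau>) \<in> borel_measurable (lborel \<Otimes>\<^sub>M M)"
      using measurable_comp[OF h g_meas] by (simp add: comp_def split_beta')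
    have Fm: "F \<in> borel_measurable (lborel \<Otimes>\<^sub>M M)"
    proof -
      have [measurable]: "(\<lambda>p. K (fst p) (snd p) * g (\<phi> (t - fst p)) (snd p)) \<in> borel_measurable (lborel \<Otimes>\<^sub>M M)"
        using borel_measurable_times[OF Kmeas Gm] by (simp add: split_beta')
      show ?thesis unfolding F_def split_beta' by measurable
    qed
    have Fm': "(\<lambda>(\<tau>, s). F (s, \<tau>)) \<in> borel_measurable (M \<Otimes>\<^sub>M lborel)"
      using Fm measurable_pair_swap_iff by blast
    have Im: "(\<lambda>\<tau>. \<integral>\<^sup>+ s. F (s, \<tau>) \<partial>lborel) \<in> borel_measurable M"
      using lborel.borel_measurable_nn_integral[of "\<lambda>\<tau> s. F (s, \<tau>)" M] Fm' by simp
    have "(\<integral>\<^sup>+ \<tau>. (\<integral>\<^sup>+ s. F (s, \<tau>) \<partial>lborel) \<partial>M) = 0"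
      using phi_sol[of t] t0 by (simp add: F_def)
    then have AE0: "AE \<tau> in M. (\<integral>\<^sup>+ s. F (s, \<tau>) \<partial>lborel) = 0"
      using nn_integral_0_iff_AE[OF Im] by simp
    obtain \<tau> where \<tau>: "\<tau> \<in> Xt" "(\<integral>\<^sup>+ s. F (s, \<tau>) \<partial>lborel) = 0"
    proof (rule ccontr)
      assume "\<not> thesis"
      with that have "AE \<tau> in M. \<tau> \<notin> Xt"
        using AE0 by (auto elim!: AE_mp)
      then have "emeasure M Xt = 0"
        using AE_iff_measurable[OF Xt_sets, of "\<lambda>\<tau>. \<tau> \<notin> Xt"] Xt_sets sets.sets_into_space
        by auto
      then show False using Xt_pos by (simp add: measure_def)
    qed
    have \<tau>M: "\<tau> \<in> space M" using \<tau>(1) Xt_sets sets.sets_into_space by auto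
    have Fs: "(\<lambda>s. F (s, \<tau>)) \<in> borel_measurable lborel"
      using measurable_Pair1[OF Fm \<tau>M] by simp
    have AEs: "AE s in lborel. F (s, \<tau>) = 0"
      using nn_integral_0_iff_AE[OF Fs] \<tau>(2) by simp
    have z: "\<phi> (t - s) = 0" if s: "- A \<tau> < s" "s < A \<tau>" for s
    proof (rule ccontr)
      assume nz: "\<phi> (t - s) \<noteq> 0"
      have "isCont (\<lambda>s. \<phi> (t - s)) s"
      proof (rule isCont_o2[where f="\<lambda>s. t - s" and g=\<phi>])
        show "isCont (\<lambda>s. t - s) s" by (intro continuous_intros)
        show "isCont \<phi> (t - s)" using phi_cont continuous_on_eq_continuous_at[OF open_UNIV] by blast
      qed
      then obtain d where d: "d > 0" "\<And>x. \<bar>x - s\<bar> < d \<Longrightarrow> \<phi> (t - x) \<noteq> 0"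
      proof -
        from continuous_at_avoid[OF \<open>isCont (\<lambda>s. \<phi> (t - s)) s\<close> nz]
        obtain e where "e > 0" "\<forall>y. dist s y < e \<longrightarrow> \<phi> (t - y) \<noteq> 0" by blast
        then show ?thesis using that[of e] by (simp add: dist_real_def abs_minus_commute)
      qed
      define a where "a = max (- A \<tau>) (s - d)"
      define b where "b = min (A \<tau>) (s + d)"
      have ab: "a < b" using s d by (auto simp: a_def b_def)
      have sub: "{a<..<b} \<subseteq> {x \<in> space lborel. \<not> F (x, \<tau>) = 0}"
      proof
        fix x assume x: "x \<in> {a<..<b}"
        then have x1: "- A \<tau> < x" "x < A \<tau>" "\<bar>x - s\<bar> < d" by (auto simp: a_def b_def)
        have "K x \<tau> > 0" using hyp_ii[OF \<tau>(1) x1(1,2)] .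
        moreover have "g (\<phi> (t - x)) \<tau> > 0"
          using hyp_i[OF \<tau>(1) phi_nonneg[of "t - x"]] g_nonneg[OF phi_nonneg \<tau>M] d(2)[OF x1(3)]
          by (metis order_le_less)
        ultimately show "x \<in> {x \<in> space lborel. \<not> F (x, \<tau>) = 0}"
          by (simp add: F_def)
      qed
      obtain N where N: "{x \<in> space lborel. \<not> F (x, \<tau>) = 0} \<subseteq> N" "N \<in> sets lborel" "emeasure lborel N = 0"
        using AEs by (auto elim!: AE_E)
      have "emeasure lborel {a<..<b} \<le> emeasure lborel N"
        using sub N by (intro emeasure_mono) auto
      then show False using ab N(3) by simp
    qed
    show ?thesis
    proof (intro exI[of _ "A \<tau>"] conjI allI impI)
      show "A \<tau> > 0" using A_pos \<tau>(1) by simp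
      fix y assume "\<bar>y - t\<bar> < A \<tau>"
      then have "\<phi> (t - (t - y)) = 0" by (intro z) auto
      then show "\<phi> y = 0" by simp
    qed
  qed
  define Z where "Z = {t. \<phi> t = 0}"
  have oZ: "open Z"
    unfolding open_dist Z_def
  proof safe
    fix t assume "\<phi> t = 0"
    from loc[OF this] obtain e where "e > 0" "\<forall>y. \<bar>y - t\<bar> < e \<longrightarrow> \<phi> y = 0" by blast
    then show "\<exists>e>0. \<forall>y. dist y t < e \<longrightarrow> y \<in> {t. \<phi> t = 0}"
      by (auto simp: dist_real_def)
  qed
  have cZ: "closed Z"
    unfolding Z_def using continuous_closed_preimage_constant[OF phi_cont closed_UNIV, of 0] by simp
  have "Z \<inter> UNIV = {} \<or> (- Z) \<inter> UNIV = {}"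
    by (rule connectedD[OF connected_UNIV oZ]) (use cZ in \<open>auto simp: open_Compl\<close>)
  moreover have "0 \<in> Z" using phi0 by (simp add: Z_def)
  ultimately show ?thesis by (auto simp: Z_def)
qed

end
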